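(* If $0<\delta < \frac{8}{5} g^{-k-3}k^{-2}$, then for every positive integer $t$, \[ \left|\frac{1}{(2 \pi)^{d}} \int_{R_{\delta}} \Phi(\vec \theta)^t \, \mathrm{d} \vec \theta \right| \leq \exp \left(- \tfrac{11}{192} g^{-k} t \delta^2 \right).\]
   Context: Let $g\ge 2$, $k\ge 2$ be integers, $\mathbb Z_g$ the integers mod $g$, and $d=\binom{k}{2}(g-1)$. Index the coordinates of $\mathbb R^d$ by pairs $(\{i,j\},a)$ with $1\le i<j\le k$ and $a\in\mathbb Z_g\setminus\{0\}$. Define $Z:(\mathbb Z_g)^k\to\mathbb R^d$ by $[Z(\vec x)]_{\{i,j\},a}=1-1/g$ if $x_i-x_j=a$ and $-1/g$ otherwise. Define $\Phi(\vec\theta)=\sum_{\vec x\in(\mathbb Z_g)^k} g^{-k}e^{i\vec\theta\cdot Z(\vec x)}$, $\Lambda=\{\vec\theta\in\mathbb R^d: |\Phi(\vec\theta)|=1\}$, $\Lambda_0=\Lambda\cap[-\pi,\pi)^d$. For $\vec\theta\in[-\pi,\pi)^d$ and $\delta>0$ let $B_\delta(\vec\theta)=\{\vec\mu\in[-\pi,\pi)^d: \vec\mu\equiv\vec\theta+\vec\zeta \pmod{2\pi}$ componentwise, for some $\vec\zeta$ with $|\zeta_{\{i,j\},a}|<\delta$ for all coordinates$\}$, and $R_\delta=[-\pi,\pi)^d\setminus\bigcup_{\vec\theta\in\Lambda_0}B_\delta(\vec\theta)$. *)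

theory Defs
  imports "HOL-Analysis.Analysis"
begin

text \<open>Coordinates of R^d are indexed by ((i,j),a) with 1 <= i < j <= k and
  a in Z_g \ {0}, represented by 1 <= a < g.  Vectors in R^d are extensional
  functions on this index set (as in the product measure PiM).\<close>

definition Idx :: "nat \<Rightarrow> nat \<Rightarrow> ((nat \<times> nat) \<times> nat) set" where
  "Idx g k = {((i,j),a). 1 \<le> i \<and> i < j \<and> j \<le> k \<and> 1 \<le> a \<and> a < g}"

definition Zgk :: "nat \<Rightarrow> nat \<Rightarrow> (nat \<Rightarrow> nat) set" where
  "Zgk g k = PiE {1..k} (\<lambda>_. {0..<g})"

definition Zvec :: "nat \<Rightarrow> (nat \<Rightarrow> nat) \<Rightarrow> ((nat \<times> nat) \<times> nat) \<Rightarrow> real" where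
  "Zvec g x c = (case c of ((i,j),a) \<Rightarrow>
     (if (int (x i) - int (x j)) mod int g = int a then 1 - 1 / real g else - 1 / real g))"

definition Phi :: "nat \<Rightarrow> nat \<Rightarrow> (((nat \<times> nat) \<times> nat) \<Rightarrow> real) \<Rightarrow> complex" where
  "Phi g k \<theta> = (\<Sum>x\<in>Zgk g k. complex_of_real (1 / real g ^ k) *
      exp (\<i> * complex_of_real (\<Sum>c\<in>Idx g k. \<theta> c * Zvec g x c)))"

definition Box :: "nat \<Rightarrow> nat \<Rightarrow> (((nat \<times> nat) \<times> nat) \<Rightarrow> real) set" where
  "Box g k = PiE (Idx g k) (\<lambda>_. {-pi..<pi})"

definition Lambda0 :: "nat \<Rightarrow> nat \<Rightarrow> (((nat \<times> nat) \<times> nat) \<Rightarrow> real) set" where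
  "Lambda0 g k = {\<theta> \<in> Box g k. norm (Phi g k \<theta>) = 1}"

definition Bdelta :: "nat \<Rightarrow> nat \<Rightarrow> real \<Rightarrow> (((nat \<times> nat) \<times> nat) \<Rightarrow> real)
    \<Rightarrow> (((nat \<times> nat) \<times> nat) \<Rightarrow> real) set" where
  "Bdelta g k \<delta> \<theta> = {\<mu> \<in> Box g k. \<exists>\<zeta>. (\<forall>c\<in>Idx g k. \<bar>\<zeta> c\<bar> < \<delta>) \<and>
      (\<forall>c\<in>Idx g k. \<exists>n::int. \<mu> c = \<theta> c + \<zeta> c + 2 * pi * real_of_int n)}"

definition Rdelta :: "nat \<Rightarrow> nat \<Rightarrow> real \<Rightarrow> (((nat \<times> nat) \<times> nat) \<Rightarrow> real) set" where
  "Rdelta g k \<delta> = Box g k - (\<Union>\<theta>\<in>Lambda0 g k. Bdelta g k \<delta> \<theta>)"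

definition dim_d :: "nat \<Rightarrow> nat \<Rightarrow> nat" where
  "dim_d g k = (k choose 2) * (g - 1)"

definition Leb :: "nat \<Rightarrow> nat \<Rightarrow> (((nat \<times> nat) \<times> nat) \<Rightarrow> real) measure" where
  "Leb g k = PiM (Idx g k) (\<lambda>_. lborel)"

end

theory Submission
  imports Defs
begin


lemma cos_quartic: "cos (x::real) \<le> 1 - x^2/2 + x^4/24"
proof -
  obtain t where "cos x = (\<Sum>m<4. cos_coeff m * x ^ m) + (cos(t + 1/2 * real 4 * pi) / fact 4) * x ^ 4"
    using Maclaurin_cos_expansion by blast
  moreover have "(\<Sum>m<4. cos_coeff m * x ^ m) = 1 - x^2/2"
  proof -
    have "(\<Sum>m<4. cos_coeff m * x ^ m) = cos_coeff 0 + cos_coeff 1 * x + cos_coeff 2 * x^2 + cos_coeff 3 * x^3"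
      by (simp add: numeral_eq_Suc)
    moreover have "cos_coeff 1 = 0" "cos_coeff 3 = 0" "cos_coeff 2 = -1/2"
      by (simp_all add: cos_coeff_def fact_numeral)
    ultimately show ?thesis by simp
  qed
  moreover have "cos(t + 1/2 * real 4 * pi) / fact 4 * x ^ 4 \<le> x^4/24"
  proof -
    have "cos(t + 1/2 * real 4 * pi) / fact 4 * x ^ 4 = cos(t + 1/2 * real 4 * pi) * (x^4/24)"
      by (simp add: fact_numeral)
    also have "\<dots> \<le> 1 * (x^4/24)"
      by (rule mult_right_mono) simp_all
    finally show ?thesis by simp
  qed
  ultimately show ?thesis by linarith
qed

lemma one_minus_cos_bound:
  fixes \<psi> \<delta> :: real
  assumes "0 < \<delta>" "\<delta> \<le> 2" and H: "\<And>n::int. \<delta>/2 \<le> \<bar>\<psi> - 2*pi*n\<bar>"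
  shows "11/96 * \<delta>^2 \<le> 1 - cos \<psi>"
proof -
  define n where "n = round (\<psi> / (2*pi))"
  define p where "p = \<psi> - 2*pi*n"
  have "\<bar>\<psi>/(2*pi) - n\<bar> \<le> 1/2" unfolding n_def by (rule of_int_round_abs_le[of "\<psi>/(2*pi)", unfolded abs_minus_commute])
  moreover have "p = 2*pi*(\<psi>/(2*pi) - n)" by (simp add: p_def field_simps)
  ultimately have "\<bar>p\<bar> \<le> pi" by (simp add: abs_mult)
  have cp: "cos \<psi> = cos \<bar>p\<bar>"
  proof -
    have "cos \<psi> = cos (p + (2*pi) * real_of_int n)" unfolding p_def by (simp add: algebra_simps)
    also have "\<dots> = cos p" by (simp add: cos_add)
    finally show ?thesis by simp
  qed
  have "\<delta>/2 \<le> \<bar>p\<bar>" using H[of n] unfolding p_def by simp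
  have "\<delta>/2 \<le> pi" using assms pi_gt3 by linarith
  have "cos \<bar>p\<bar> \<le> cos (\<delta>/2)"
    using cos_monotone_0_pi_le[of "\<delta>/2" "\<bar>p\<bar>"] \<open>\<delta>/2 \<le> \<bar>p\<bar>\<close> \<open>\<bar>p\<bar> \<le> pi\<close> assms by simp
  also have "\<dots> \<le> 1 - (\<delta>/2)^2/2 + (\<delta>/2)^4/24" by (rule cos_quartic)
  finally have c: "cos \<psi> \<le> 1 - (\<delta>/2)^2/2 + (\<delta>/2)^4/24" using cp by simp
  have "\<delta>^4 \<le> 4 * \<delta>^2"
  proof -
    have "\<delta>^2 \<le> 4" using assms using power_mono[of \<delta> 2 2] by simp
    then have "\<delta>^2 * \<delta>^2 \<le> 4 * \<delta>^2" by (rule mult_right_mono) simp_all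
    moreover have "\<delta>^4 = \<delta>^2 * \<delta>^2" by (simp flip: power_add)
    ultimately show ?thesis by linarith
  qed
  moreover have "(\<delta>/2)^2 = \<delta>^2/4" "(\<delta>/2)^4 = \<delta>^4/16" by (simp_all add: power_divide)
  ultimately show ?thesis using c by linarith
qed


definition Mt :: "nat \<Rightarrow> (nat\<Rightarrow>nat) \<Rightarrow> ((nat\<times>nat)\<times>nat) \<Rightarrow> real" where
 "Mt g x c = (case c of ((i,j),a) \<Rightarrow> if (int (x i) - int (x j)) mod int g = int a then 1 else 0)"

definition psi :: "nat \<Rightarrow> nat \<Rightarrow> (((nat \<times> nat) \<times> nat) \<Rightarrow> real) \<Rightarrow> (nat\<Rightarrow>nat) \<Rightarrow> real" where
 "psi g k \<theta> x = (\<Sum>c\<in>Idx g k. \<theta> c * Mt g x c)"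

definition sh :: "nat \<Rightarrow> nat set \<Rightarrow> nat \<Rightarrow> (nat\<Rightarrow>nat) \<Rightarrow> (nat\<Rightarrow>nat)" where
 "sh g S a x = (\<lambda>l. if l \<in> S then (x l + a) mod g else x l)"

definition E :: "nat \<Rightarrow> nat \<Rightarrow> nat \<Rightarrow> (nat\<Rightarrow>nat) \<Rightarrow> real" where
 "E i j b x = (if x i = b \<and> x j = 0 then 1 else 0)"

lemma finite_Zgk: "finite (Zgk g k)" by (simp add: Zgk_def finite_PiE)

lemma finite_Idx: "finite (Idx g k)"
proof -
  have "Idx g k \<subseteq> ({1..k} \<times> {1..k}) \<times> {1..<g}" unfolding Idx_def by auto
  then show ?thesis by (rule finite_subset) auto
qed

lemma Zgk_mem: "x \<in> Zgk g k \<longleftrightarrow> (\<forall>l\<in>{1..k}. x l < g) \<and> (\<forall>l. l \<notin> {1..k} \<longrightarrow> x l = undefined)"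
  unfolding Zgk_def PiE_iff extensional_def by auto

lemma sh_in: assumes "x \<in> Zgk g k" "S \<subseteq> {1..k}" "g > 0" shows "sh g S a x \<in> Zgk g k"
  using assms unfolding Zgk_mem sh_def by auto

lemma mod_back: fixes x a g :: nat assumes "x < g" "a < g" shows "((x + a) mod g + (g - a) mod g) mod g = x"
proof (cases "a = 0")
  case True then show ?thesis using assms by simp
next
  case False
  then have "(g - a) mod g = g - a" using assms by simp
  then have "((x + a) mod g + (g - a) mod g) mod g = (x + a + (g - a)) mod g" by (simp add: mod_add_left_eq)
  also have "x + a + (g - a) = x + g" using assms by simp
  finally show ?thesis using assms by simp
qed

lemma sh_bij: assumes "g > 0" "a < g" "S \<subseteq> {1..k}"
  shows "bij_betw (sh g S a) (Zgk g k) (Zgk g k)"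
proof (rule bij_betw_byWitness[where f'="sh g S ((g - a) mod g)"])
  show "\<forall>x\<in>Zgk g k. sh g S ((g - a) mod g) (sh g S a x) = x"
  proof
    fix x assume x: "x \<in> Zgk g k"
    show "sh g S ((g - a) mod g) (sh g S a x) = x"
    proof
      fix l show "sh g S ((g - a) mod g) (sh g S a x) l = x l"
        using x assms mod_back[of "x l" g a] unfolding sh_def Zgk_mem by auto
    qed
  qed
  show "\<forall>x\<in>Zgk g k. sh g S a (sh g S ((g - a) mod g) x) = x"
  proof
    fix x assume x: "x \<in> Zgk g k"
    show "sh g S a (sh g S ((g - a) mod g) x) = x"
    proof
      fix l
      have "((x l + (g - a) mod g) mod g + a) mod g = x l" if "l \<in> S"
      proof -
        have xl: "x l < g" using x that assms unfolding Zgk_mem by auto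
        have "((x l + (g - a) mod g) mod g + a) mod g = (x l + (g - a) mod g + a) mod g" by (simp add: mod_add_left_eq)
        also have "\<dots> = x l"
        proof (cases "a = 0")
          case True then show ?thesis using xl by simp
        next
          case False then have e: "x l + (g - a) mod g + a = x l + g" using assms by simp
          show ?thesis unfolding e using xl by simp
        qed
        finally show ?thesis .
      qed
      then show "sh g S a (sh g S ((g - a) mod g) x) l = x l" unfolding sh_def by auto
    qed
  qed
  show "sh g S a ` Zgk g k \<subseteq> Zgk g k" using sh_in assms by blast
  show "sh g S ((g - a) mod g) ` Zgk g k \<subseteq> Zgk g k" using sh_in assms by blast
qed

lemma Mt_sh: assumes "c = ((i',j'),a')" "i' \<in> S \<longleftrightarrow> j' \<in> S"
  shows "Mt g (sh g S a x) c = Mt g x c"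
proof (cases "i' \<in> S")
  case True
  then have "(int (sh g S a x i') - int (sh g S a x j')) mod int g
      = ((int (x i') + int a) mod int g - (int (x j') + int a) mod int g) mod int g"
    using assms unfolding sh_def by (simp add: of_nat_mod)
  also have "\<dots> = (int (x i') - int (x j')) mod int g" by (simp add: mod_diff_eq)
  finally show ?thesis using assms unfolding Mt_def by simp
next
  case False
  then show ?thesis using assms unfolding Mt_def sh_def by simp
qed

lemma E_sh: assumes "x \<in> Zgk g k" "i \<in> S" "j \<notin> S" "S \<subseteq> {1..k}" "a < g"
  shows "E i j a (sh g S a x) = E i j 0 x"
proof -
  have xi: "x i < g" using assms unfolding Zgk_mem by auto
  have "(x i + a) mod g = a \<longleftrightarrow> x i = 0"
  proof (cases "x i + a < g")
    case True then show ?thesis using assms(5) by simp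
  next
    case False
    then have "(x i + a) mod g = x i + a - g" using xi assms by (simp add: mod_if)
    then show ?thesis using xi False assms(5) by auto
  qed
  then show ?thesis using assms unfolding E_def sh_def by simp
qed



lemma sum_E_card: "(\<Sum>x\<in>Zgk g k. E i j b x) = real (card {x\<in>Zgk g k. x i = b \<and> x j = 0})"
proof -
  have "(\<Sum>x\<in>Zgk g k. E i j b x) = (\<Sum>x\<in>{x\<in>Zgk g k. x i = b \<and> x j = 0}. 1)"
    unfolding E_def by (rule sum.inter_filter[symmetric, unfolded Int_def]) (simp add: finite_Zgk)
  then show ?thesis by simp
qed

lemma count_E: assumes "i \<in> {1..k}" "j \<in> {1..k}" "i \<noteq> j" "b < g"
  shows "(\<Sum>x\<in>Zgk g k. E i j b x) = real g ^ (k - 2)"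
proof -
  define B where "B = (\<lambda>l. if l = i then {b} else if l = j then {0} else {0..<g})"
  have set: "{x\<in>Zgk g k. x i = b \<and> x j = 0} = PiE {1..k} B"
  proof (rule set_eqI)
    fix x
    show "x \<in> {x\<in>Zgk g k. x i = b \<and> x j = 0} \<longleftrightarrow> x \<in> PiE {1..k} B"
      using assms unfolding Zgk_def B_def PiE_iff extensional_def
      by (auto split: if_splits)
  qed
  define f where "f = (\<lambda>l. card (B l))"
  have "card (PiE {1..k} B) = prod f {1..k}" unfolding f_def by (simp add: card_PiE)
  also have "\<dots> = prod f ({1..k} - {i,j}) * prod f {i,j}"
    using assms by (subst prod.subset_diff[of "{i,j}"]) auto
  also have "prod f {i,j} = 1" using assms unfolding f_def B_def by simp
  also have "prod f ({1..k} - {i,j}) = prod (\<lambda>_. g) ({1..k} - {i,j})"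
    by (rule prod.cong) (auto simp: f_def B_def)
  also have "\<dots> = g ^ card ({1..k} - {i,j})" by simp
  also have "card ({1..k} - {i,j}) = k - 2" using assms by (subst card_Diff_subset) auto
  finally have "card (PiE {1..k} B) = g ^ (k - 2)" by simp
  then show ?thesis unfolding sum_E_card set by simp
qed



lemma swap_sum: assumes "g>0" "a<g" "S \<subseteq> {1..k}" "i\<in>S" "j\<notin>S" "i' \<in> S \<longleftrightarrow> j' \<in> S"
  shows "(\<Sum>x\<in>Zgk g k. E i j a x * Mt g x ((i',j'),a')) = (\<Sum>x\<in>Zgk g k. E i j 0 x * Mt g x ((i',j'),a'))"
proof -
  have "(\<Sum>x\<in>Zgk g k. E i j a x * Mt g x ((i',j'),a'))
      = (\<Sum>x\<in>Zgk g k. E i j a (sh g S a x) * Mt g (sh g S a x) ((i',j'),a'))"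
    using sum.reindex_bij_betw[OF sh_bij[OF assms(1,2,3)], of "\<lambda>x. E i j a x * Mt g x ((i',j'),a')"]
    by simp
  also have "\<dots> = (\<Sum>x\<in>Zgk g k. E i j 0 x * Mt g x ((i',j'),a'))"
    by (rule sum.cong) (use assms E_sh Mt_sh in auto)
  finally show ?thesis .
qed

lemma key: assumes c: "((i,j),a) \<in> Idx g k" and c': "c' \<in> Idx g k"
  shows "(\<Sum>x\<in>Zgk g k. (E i j a x - E i j 0 x) * Mt g x c') = (if c' = ((i,j),a) then real g^(k-2) else 0)"
proof -
  obtain i' j' a' where c'eq: "c' = ((i',j'),a')" by (metis prod.collapse)
  have ij: "1 \<le> i" "i < j" "j \<le> k" "1 \<le> a" "a < g" using c unfolding Idx_def by auto
  have ij': "1 \<le> i'" "i' < j'" "j' \<le> k" "1 \<le> a'" "a' < g" using c' c'eq unfolding Idx_def by auto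
  show ?thesis
  proof (cases "c' = ((i,j),a)")
    case True
    have "(\<Sum>x\<in>Zgk g k. (E i j a x - E i j 0 x) * Mt g x c') = (\<Sum>x\<in>Zgk g k. E i j a x)"
    proof (rule sum.cong)
      fix x assume "x \<in> Zgk g k"
      show "(E i j a x - E i j 0 x) * Mt g x c' = E i j a x"
        using True ij unfolding E_def Mt_def by (auto simp: of_nat_mod[symmetric])
    qed simp
    also have "\<dots> = real g^(k-2)" using ij by (intro count_E) auto
    finally show ?thesis using True by simp
  next
    case False
    have eq: "(\<Sum>x\<in>Zgk g k. E i j a x * Mt g x c') = (\<Sum>x\<in>Zgk g k. E i j 0 x * Mt g x c')"
    proof (cases "i' \<noteq> i \<and> j' \<noteq> i")
      case True
      then show ?thesis unfolding c'eq using ij by (intro swap_sum[where S="{i}"]) auto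
    next
      case F1: False
      show ?thesis
      proof (cases "i' \<noteq> j \<and> j' \<noteq> j")
        case True
        then show ?thesis unfolding c'eq using ij ij' F1 by (intro swap_sum[where S="{1..k} - {j}"]) auto
      next
        case False
        then have "i' = i" "j' = j" using F1 ij ij' by auto
        then have "a' \<noteq> a" using \<open>c' \<noteq> _\<close> c'eq by auto
        have z1: "E i j a x * Mt g x c' = 0" for x
          using \<open>i' = i\<close> \<open>j' = j\<close> \<open>a' \<noteq> a\<close> ij ij' unfolding E_def Mt_def c'eq
          by (auto simp: of_nat_mod[symmetric])
        have z0: "E i j 0 x * Mt g x c' = 0" for x
          using \<open>i' = i\<close> \<open>j' = j\<close> ij ij' unfolding E_def Mt_def c'eq by auto
        show ?thesis by (simp add: z1 z0)
      qed
    qed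
    have "(\<Sum>x\<in>Zgk g k. (E i j a x - E i j 0 x) * Mt g x c')
       = (\<Sum>x\<in>Zgk g k. E i j a x * Mt g x c') - (\<Sum>x\<in>Zgk g k. E i j 0 x * Mt g x c')"
      by (simp add: left_diff_distrib sum_subtractf)
    then show ?thesis using eq False by simp
  qed
qed

lemma inversion: assumes c: "((i,j),a) \<in> Idx g k"
  shows "(\<Sum>x\<in>Zgk g k. (E i j a x - E i j 0 x) * psi g k \<theta> x) = real g^(k-2) * \<theta> ((i,j),a)"
proof -
  have "(\<Sum>x\<in>Zgk g k. (E i j a x - E i j 0 x) * psi g k \<theta> x)
     = (\<Sum>c'\<in>Idx g k. \<theta> c' * (\<Sum>x\<in>Zgk g k. (E i j a x - E i j 0 x) * Mt g x c'))"
    unfolding psi_def by (simp add: sum_distrib_left sum_distrib_right mult.assoc mult.left_commute sum.swap[of _ "Zgk g k"])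
  also have "\<dots> = (\<Sum>c'\<in>Idx g k. \<theta> c' * (if c' = ((i,j),a) then real g^(k-2) else 0))"
    by (rule sum.cong) (use key[OF c] in auto)
  also have "\<dots> = real g^(k-2) * \<theta> ((i,j),a)" using c finite_Idx by (simp add: if_distrib cong: if_cong)
  finally show ?thesis .
qed



lemma Zvec_Mt: "Zvec g x c = Mt g x c - 1 / real g"
  by (cases c) (auto simp: Zvec_def Mt_def)

lemma Zsum: "(\<Sum>c\<in>Idx g k. \<theta> c * Zvec g x c) = psi g k \<theta> x - (\<Sum>c\<in>Idx g k. \<theta> c) / real g"
  unfolding psi_def Zvec_Mt by (simp add: right_diff_distrib sum_subtractf sum_divide_distrib)

lemma Phi_eq: "Phi g k \<theta> = exp (\<i> * complex_of_real (- (\<Sum>c\<in>Idx g k. \<theta> c) / real g)) * complex_of_real (1 / real g ^ k)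
     * (\<Sum>x\<in>Zgk g k. exp (\<i> * complex_of_real (psi g k \<theta> x)))"
proof -
  define s where "s = (\<Sum>c\<in>Idx g k. \<theta> c) / real g"
  have "\<And>x. exp (\<i> * complex_of_real (\<Sum>c\<in>Idx g k. \<theta> c * Zvec g x c))
     = exp (\<i> * complex_of_real (- s)) * exp (\<i> * complex_of_real (psi g k \<theta> x))"
  proof -
    fix x
    have eq: "\<i> * complex_of_real (\<Sum>c\<in>Idx g k. \<theta> c * Zvec g x c) = \<i> * complex_of_real (- s) + \<i> * complex_of_real (psi g k \<theta> x)"
      unfolding Zsum s_def by (simp add: algebra_simps)
    show "exp (\<i> * complex_of_real (\<Sum>c\<in>Idx g k. \<theta> c * Zvec g x c))
     = exp (\<i> * complex_of_real (- s)) * exp (\<i> * complex_of_real (psi g k \<theta> x))"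
      unfolding eq by (rule exp_add)
  qed
  then show ?thesis unfolding Phi_def s_def
    by (simp add: sum_distrib_left mult.assoc mult.left_commute)
qed

lemma norm_Phi: "norm (Phi g k \<theta>) = (1 / real g ^ k) * norm (\<Sum>x\<in>Zgk g k. exp (\<i> * complex_of_real (psi g k \<theta> x)))"
  unfolding Phi_eq norm_mult by (simp del: of_real_divide of_real_minus)

lemma card_Zgk: "card (Zgk g k) = g ^ k"
  unfolding Zgk_def by (simp add: card_PiE)

lemma exp_2pi_int: "exp (\<i> * complex_of_real (2 * pi * real_of_int n)) = 1"
proof -
  have "exp (\<i> * complex_of_real (2 * pi * real_of_int n)) = exp (0 + \<i> * (of_int n * (of_real pi * 2)))"
    by (simp add: algebra_simps)
  also have "\<dots> = 1" by (subst exp_plus_2pin) simp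
  finally show ?thesis .
qed

lemma sum_abs_coef: assumes c: "((i,j),a) \<in> Idx g k"
  shows "(\<Sum>x\<in>Zgk g k. \<bar>E i j a x - E i j 0 x\<bar>) = 2 * real g^(k-2)"
proof -
  have ij: "1 \<le> i" "i < j" "j \<le> k" "1 \<le> a" "a < g" using c unfolding Idx_def by auto
  have "(\<Sum>x\<in>Zgk g k. \<bar>E i j a x - E i j 0 x\<bar>) = (\<Sum>x\<in>Zgk g k. E i j a x + E i j 0 x)"
    by (rule sum.cong) (use ij in \<open>auto simp: E_def\<close>)
  also have "\<dots> = real g^(k-2) + real g^(k-2)"
    using ij by (simp add: sum.distrib count_E)
  finally show ?thesis by simp
qed



lemma Mt_Ints: "Mt g x c \<in> \<int>" unfolding Mt_def by (auto split: prod.splits)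
lemma Mt_range: "0 \<le> Mt g x c" "Mt g x c \<le> 1" unfolding Mt_def by (auto split: prod.splits)
lemma E_Ints: "E i j a x \<in> \<int>" unfolding E_def by auto

lemma Ints_close_eq: fixes a b :: real assumes "a \<in> \<int>" "b \<in> \<int>" "\<bar>a - b\<bar> < 1" shows "a = b"
proof -
  obtain p q where "a = of_int p" "b = of_int q" using assms(1,2) Ints_cases by metis
  then have "\<bar>p - q\<bar> < 1" using assms(3) by linarith
  then have "p = q" by simp
  then show ?thesis using \<open>a = _\<close> \<open>b = _\<close> by simp
qed

lemma near_Lambda:
  assumes g: "g \<ge> 2" and th: "\<theta> \<in> Box g k" and dpos: "\<delta> > 0"
   and small: "(\<delta>/2 + real (card (Idx g k)) * \<delta>) * real g^(k-2) < 2*pi"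
   and H: "\<forall>x\<in>Zgk g k. \<exists>n::int. \<bar>psi g k \<theta> x - 2*pi*n\<bar> < \<delta>/2"
  shows "\<theta> \<in> (\<Union>l\<in>Lambda0 g k. Bdelta g k \<delta> l)"
proof -
  obtain n where n: "\<forall>x\<in>Zgk g k. \<bar>psi g k \<theta> x - 2*pi*real_of_int (n x)\<bar> < \<delta>/2" using bchoice[OF H] by blast
  define r where "r x = psi g k \<theta> x - 2*pi*real_of_int (n x)" for x
  have X0: "Zgk g k \<noteq> {}"
  proof
    assume "Zgk g k = {}"
    then have "card (Zgk g k) = 0" by simp
    then show False using g unfolding card_Zgk by simp
  qed
  have finX: "finite (Zgk g k)" by (rule finite_Zgk)
  define \<rho> where "\<rho> = Max ((\<lambda>x. \<bar>r x\<bar>) ` Zgk g k)"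
  have r\<rho>: "\<bar>r x\<bar> \<le> \<rho>" if "x \<in> Zgk g k" for x
    unfolding \<rho>_def using finX that by (intro Max_ge) auto
  have "\<rho> \<in> (\<lambda>x. \<bar>r x\<bar>) ` Zgk g k" unfolding \<rho>_def using finX X0 by (intro Max_in) auto
  then have \<rho>\<delta>: "\<rho> < \<delta>/2" using n unfolding r_def by auto
  define G where "G = real g^(k-2)"
  have Gpos: "G > 0" unfolding G_def using g by simp
  define coef where "coef c x = (case c of ((i,j),a) \<Rightarrow> E i j a x - E i j 0 x)" for c x
  define \<zeta> where "\<zeta> c = (\<Sum>x\<in>Zgk g k. coef c x * r x) / G" for c
  define m where "m c = (\<Sum>x\<in>Zgk g k. coef c x * real_of_int (n x)) / G" for c
  have thdec: "\<theta> c = 2*pi*m c + \<zeta> c" if c: "c \<in> Idx g k" for c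
  proof -
    obtain i j a where ceq: "c = ((i,j),a)" by (metis prod.collapse)
    have "G * \<theta> c = (\<Sum>x\<in>Zgk g k. coef c x * psi g k \<theta> x)"
      using inversion[of i j a g k \<theta>] c unfolding ceq coef_def G_def by simp
    also have "\<dots> = (\<Sum>x\<in>Zgk g k. 2*pi*(coef c x * real_of_int (n x)) + coef c x * r x)"
      by (rule sum.cong) (auto simp: r_def algebra_simps)
    also have "\<dots> = 2*pi*(\<Sum>x\<in>Zgk g k. coef c x * real_of_int (n x)) + (\<Sum>x\<in>Zgk g k. coef c x * r x)"
      by (simp add: sum.distrib sum_distrib_left)
    also have "\<dots> = G * (2*pi*m c + \<zeta> c)"
      using Gpos unfolding m_def \<zeta>_def by (simp add: field_simps)
    finally show ?thesis using Gpos by simp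
  qed
  have \<zeta>b: "\<bar>\<zeta> c\<bar> \<le> 2*\<rho>" if c: "c \<in> Idx g k" for c
  proof -
    obtain i j a where ceq: "c = ((i,j),a)" by (metis prod.collapse)
    have "\<bar>\<Sum>x\<in>Zgk g k. coef c x * r x\<bar> \<le> (\<Sum>x\<in>Zgk g k. \<bar>coef c x\<bar> * \<rho>)"
    proof -
      have "\<bar>\<Sum>x\<in>Zgk g k. coef c x * r x\<bar> \<le> (\<Sum>x\<in>Zgk g k. \<bar>coef c x * r x\<bar>)" by (rule sum_abs)
      also have "\<dots> \<le> (\<Sum>x\<in>Zgk g k. \<bar>coef c x\<bar> * \<rho>)"
        by (rule sum_mono) (use r\<rho> in \<open>auto simp: abs_mult intro: mult_left_mono\<close>)
      finally show ?thesis .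
    qed
    also have "\<dots> = 2 * G * \<rho>"
      using sum_abs_coef[of i j a g k] c unfolding ceq coef_def G_def by (simp add: sum_distrib_right[symmetric])
    finally show ?thesis unfolding \<zeta>_def using Gpos by (simp add: field_simps)
  qed
  have \<zeta>d: "\<bar>\<zeta> c\<bar> < \<delta>" if "c \<in> Idx g k" for c using \<zeta>b[OF that] \<rho>\<delta> by linarith
  have integ: "(\<Sum>c\<in>Idx g k. Mt g y c * m c) = real_of_int (n y)" if y: "y \<in> Zgk g k" for y
  proof -
    define V where "V = (\<Sum>c\<in>Idx g k. Mt g y c * m c)"
    define K where "K = (\<Sum>c\<in>Idx g k. Mt g y c * (\<Sum>x\<in>Zgk g k. coef c x * real_of_int (n x)))"
    have "G * V = (\<Sum>c\<in>Idx g k. G * (Mt g y c * m c))" by (simp add: V_def sum_distrib_left)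
    also have "\<dots> = K" unfolding K_def m_def using Gpos by (intro sum.cong refl) (simp add: field_simps)
    finally have KV: "K = G * V" by simp
    have coefI: "coef c x \<in> \<int>" for c x unfolding coef_def by (auto split: prod.splits intro!: Ints_diff E_Ints)
    have KI: "K \<in> \<int>" unfolding K_def
      by (intro Ints_sum Ints_mult Mt_Ints coefI) auto
    have GI: "G * real_of_int (n y) \<in> \<int>" unfolding G_def by (intro Ints_mult) auto
    have "psi g k \<theta> y = (\<Sum>c\<in>Idx g k. (2*pi*m c + \<zeta> c) * Mt g y c)"
      unfolding psi_def by (rule sum.cong) (auto simp: thdec)
    also have "\<dots> = 2*pi*V + (\<Sum>c\<in>Idx g k. \<zeta> c * Mt g y c)"
      unfolding V_def by (simp add: algebra_simps sum.distrib sum_distrib_left)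
    finally have psiy: "psi g k \<theta> y = 2*pi*V + (\<Sum>c\<in>Idx g k. \<zeta> c * Mt g y c)" .
    have "\<bar>\<Sum>c\<in>Idx g k. \<zeta> c * Mt g y c\<bar> \<le> (\<Sum>c\<in>Idx g k. \<bar>\<zeta> c * Mt g y c\<bar>)" by (rule sum_abs)
    also have "\<dots> \<le> real (card (Idx g k)) * \<delta>"
    proof (rule sum_bounded_above)
      fix c assume "c \<in> Idx g k"
      then have "\<bar>\<zeta> c\<bar> < \<delta>" by (rule \<zeta>d)
      moreover have "\<bar>Mt g y c\<bar> \<le> 1" using Mt_range[of g y c] by simp
      ultimately show "\<bar>\<zeta> c * Mt g y c\<bar> \<le> \<delta>" unfolding abs_mult
        by (metis abs_ge_zero less_imp_le mult_le_one mult.commute mult_left_le mult_mono' dual_order.trans)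
    qed
    finally have sb: "\<bar>\<Sum>c\<in>Idx g k. \<zeta> c * Mt g y c\<bar> \<le> real (card (Idx g k)) * \<delta>" .
    have ry: "\<bar>r y\<bar> < \<delta>/2" using n y unfolding r_def by auto
    have "2*pi*(V - real_of_int (n y)) = r y - (\<Sum>c\<in>Idx g k. \<zeta> c * Mt g y c)"
      using psiy unfolding r_def by (simp add: algebra_simps)
    then have "\<bar>2*pi*(V - real_of_int (n y))\<bar> = \<bar>r y - (\<Sum>c\<in>Idx g k. \<zeta> c * Mt g y c)\<bar>" by simp
    moreover have "\<bar>2*pi*(V - real_of_int (n y))\<bar> = 2*pi*\<bar>V - real_of_int (n y)\<bar>" by (simp add: abs_mult)
    moreover have "\<bar>r y - (\<Sum>c\<in>Idx g k. \<zeta> c * Mt g y c)\<bar> \<le> \<bar>r y\<bar> + \<bar>\<Sum>c\<in>Idx g k. \<zeta> c * Mt g y c\<bar>"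
      by (rule abs_triangle_ineq4)
    ultimately have "2*pi*\<bar>V - real_of_int (n y)\<bar> < \<delta>/2 + real (card (Idx g k)) * \<delta>"
      using ry sb by linarith
    then have "G*(2*pi*\<bar>V - real_of_int (n y)\<bar>) < G * (\<delta>/2 + real (card (Idx g k)) * \<delta>)"
      using Gpos by simp
    also have "\<dots> < 2*pi" using small unfolding G_def by (simp add: mult.commute)
    finally have "\<bar>K - G * real_of_int (n y)\<bar> < 1"
      unfolding KV using Gpos by (simp add: abs_mult right_diff_distrib[symmetric] mult.left_commute)
    then have "K = G * real_of_int (n y)" using KI GI by (rule Ints_close_eq[rotated 2])
    then show ?thesis using Gpos unfolding KV V_def by simp
  qed
  define q where "q c = \<lfloor>m c + 1/2\<rfloor>" for c
  define lam where "lam c = (if c \<in> Idx g k then 2*pi*(m c - q c) else undefined)" for c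
  have lamBox: "lam \<in> Box g k"
    unfolding Box_def PiE_iff extensional_def
  proof (intro conjI ballI allI impI)
    fix c assume "c \<in> Idx g k"
    have "real_of_int (q c) \<le> m c + 1/2" "m c + 1/2 < real_of_int (q c) + 1" unfolding q_def by linarith+
    then have d1: "-1/2 \<le> m c - q c" and d2: "m c - q c < 1/2" by linarith+
    have "2*pi*(-1/2) \<le> 2*pi*(m c - q c)" using d1 pi_gt_zero by (intro mult_left_mono) auto
    moreover have "2*pi*(m c - q c) < 2*pi*(1/2)" using d2 pi_gt_zero by (intro mult_strict_left_mono) auto
    ultimately have "-pi \<le> 2*pi*(m c - q c)" "2*pi*(m c - q c) < pi" by simp_all
    then show "lam c \<in> {-pi..<pi}" unfolding lam_def using \<open>c \<in> _\<close> by simp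
  qed (simp add: lam_def)
  have psilam: "exp (\<i> * complex_of_real (psi g k lam y)) = 1" if y: "y \<in> Zgk g k" for y
  proof -
    have "(\<Sum>c\<in>Idx g k. Mt g y c * real_of_int (q c)) \<in> \<int>" by (intro Ints_sum Ints_mult Mt_Ints) auto
    then obtain z where z: "(\<Sum>c\<in>Idx g k. Mt g y c * real_of_int (q c)) = real_of_int z" using Ints_cases by metis
    have "psi g k lam y = (\<Sum>c\<in>Idx g k. 2*pi*(Mt g y c * m c) - 2*pi*(Mt g y c * q c))"
      unfolding psi_def lam_def by (rule sum.cong) (auto simp: algebra_simps)
    also have "\<dots> = 2*pi*(\<Sum>c\<in>Idx g k. Mt g y c * m c) - 2*pi*(\<Sum>c\<in>Idx g k. Mt g y c * real_of_int (q c))"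
      by (simp only: sum_subtractf sum_distrib_left)
    also have "\<dots> = 2*pi*real_of_int (n y - z)"
      unfolding integ[OF y] z by (simp add: right_diff_distrib)
    finally show ?thesis by (simp only: exp_2pi_int)
  qed
  have "norm (Phi g k lam) = 1"
  proof -
    have "(\<Sum>x\<in>Zgk g k. exp (\<i> * complex_of_real (psi g k lam x))) = (\<Sum>x\<in>Zgk g k. 1)"
      by (rule sum.cong) (auto simp: psilam)
    also have "\<dots> = of_nat (g ^ k)" by (simp add: card_Zgk)
    finally show ?thesis unfolding norm_Phi using g by (simp add: norm_power)
  qed
  then have lamL: "lam \<in> Lambda0 g k" unfolding Lambda0_def using lamBox by simp
  have "\<theta> \<in> Bdelta g k \<delta> lam"
    unfolding Bdelta_def
  proof (intro CollectI conjI exI[of _ \<zeta>] ballI)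
    show "\<theta> \<in> Box g k" by (rule th)
    fix c assume c: "c \<in> Idx g k"
    show "\<bar>\<zeta> c\<bar> < \<delta>" using c by (rule \<zeta>d)
    show "\<exists>n::int. \<theta> c = lam c + \<zeta> c + 2 * pi * real_of_int n"
      by (rule exI[of _ "q c"]) (use c thdec[OF c] in \<open>simp add: lam_def algebra_simps\<close>)
  qed
  then show ?thesis using lamL by blast
qed



lemma card_pairs: "card {(i,j). 1 \<le> i \<and> i < j \<and> j \<le> (k::nat)} = k choose 2"
proof -
  define P where "P = {(i,j). 1 \<le> i \<and> i < j \<and> j \<le> (k::nat)}"
  define f where "f = (\<lambda>(i::nat,j::nat). {i,j})"
  have inj: "inj_on f P"
  proof (rule inj_onI)
    fix p q assume p: "p \<in> P" and q: "q \<in> P" and e: "f p = f q"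
    obtain i j where pe: "p = (i,j)" by fastforce
    obtain i' j' where qe: "q = (i',j')" by fastforce
    have "i < j" "i' < j'" using p q pe qe unfolding P_def by auto
    moreover have "{i,j} = {i',j'}" using e pe qe unfolding f_def by simp
    ultimately show "p = q" unfolding pe qe by (metis doubleton_eq_iff less_asym)
  qed
  have img: "f ` P = {A. A \<subseteq> {1..k} \<and> card A = 2}"
  proof
    show "f ` P \<subseteq> {A. A \<subseteq> {1..k} \<and> card A = 2}" unfolding f_def P_def by auto
    show "{A. A \<subseteq> {1..k} \<and> card A = 2} \<subseteq> f ` P"
    proof
      fix A assume A: "A \<in> {A. A \<subseteq> {1..k} \<and> card A = 2}"
      then obtain x y where xy: "A = {x,y}" "x \<noteq> y" by (auto simp: card_2_iff)
      show "A \<in> f ` P"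
      proof (cases "x < y")
        case True
        then show ?thesis using A xy unfolding f_def P_def by (auto intro!: image_eqI[of _ _ "(x,y)"])
      next
        case False
        then have "y < x" using xy by simp
        then show ?thesis using A xy unfolding f_def P_def by (auto intro!: image_eqI[of _ _ "(y,x)"])
      qed
    qed
  qed
  have "card P = card (f ` P)" using inj by (simp add: card_image)
  also have "\<dots> = card {1..k} choose 2" unfolding img by (rule n_subsets) simp
  finally show ?thesis unfolding P_def by simp
qed

lemma card_Idx: "card (Idx g k) = dim_d g k"
proof -
  have eq: "Idx g k = {(i,j). 1 \<le> i \<and> i < j \<and> j \<le> k} \<times> {1..<g}" unfolding Idx_def by auto
  show ?thesis unfolding dim_d_def eq card_cartesian_product card_pairs by simp
qed

lemma psi_x0: assumes "g > 0" "x0 = (\<lambda>l. if l \<in> {1..k} then 0 else undefined)"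
  shows "x0 \<in> Zgk g k" "psi g k \<theta> x0 = 0"
proof -
  show "x0 \<in> Zgk g k" unfolding assms(2) Zgk_mem using assms(1) by auto
  have "Mt g x0 c = 0" if "c \<in> Idx g k" for c
    using that unfolding Mt_def Idx_def assms(2) by auto
  then show "psi g k \<theta> x0 = 0" unfolding psi_def by simp
qed

lemma norm_one_plus: "norm (1 + exp (\<i> * complex_of_real p)) \<le> 2 - (1 - cos p)/2"
proof -
  have "exp (\<i> * complex_of_real p) = Complex (cos p) (sin p)"
    by (simp add: exp_Euler complex_eq_iff cos_of_real sin_of_real)
  then have "norm (1 + exp (\<i> * complex_of_real p)) = sqrt ((1 + cos p)^2 + (sin p)^2)"
    by (simp add: norm_complex_def)
  also have "(1 + cos p)^2 + (sin p)^2 = 2 + 2 * cos p"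
    using sin_cos_squared_add[of p] by (simp add: power2_eq_square algebra_simps)
  also have "sqrt (2 + 2 * cos p) \<le> sqrt ((2 - (1 - cos p)/2)^2)"
  proof (rule real_sqrt_le_mono)
    have "(2 - (1 - cos p)/2)^2 = 2 + 2 * cos p + (1 - cos p)^2/4" by (simp add: power2_eq_square field_simps)
    then show "2 + 2 * cos p \<le> (2 - (1 - cos p)/2)^2" by simp
  qed
  also have "\<dots> = 2 - (1 - cos p)/2"
  proof -
    have "0 \<le> cos p + 3" using cos_ge_minus_one[of p] by linarith
    then have "0 \<le> 2 - (1 - cos p)/2" by (simp add: field_simps)
    then show ?thesis by simp
  qed
  finally show ?thesis .
qed



lemma Phi_bound:
  assumes g: "g \<ge> 2" and d: "\<delta> > 0" "\<delta> \<le> 2"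
   and small: "(\<delta>/2 + real (card (Idx g k)) * \<delta>) * real g^(k-2) < 2*pi"
   and th: "\<theta> \<in> Rdelta g k \<delta>"
  shows "norm (Phi g k \<theta>) \<le> exp (-(11/192) * (1/real g^k) * \<delta>^2)"
proof -
  have thB: "\<theta> \<in> Box g k" and nU: "\<theta> \<notin> (\<Union>l\<in>Lambda0 g k. Bdelta g k \<delta> l)"
    using th unfolding Rdelta_def by auto
  have "\<not> (\<forall>x\<in>Zgk g k. \<exists>n::int. \<bar>psi g k \<theta> x - 2*pi*n\<bar> < \<delta>/2)"
    using near_Lambda[OF g thB d(1) small] nU by blast
  then obtain x where x: "x \<in> Zgk g k" and far: "\<And>n::int. \<delta>/2 \<le> \<bar>psi g k \<theta> x - 2*pi*n\<bar>"
    by (auto simp: not_less)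
  define x0 :: "nat\<Rightarrow>nat" where "x0 = (\<lambda>l. if l \<in> {1..k} then 0 else undefined)"
  have x0X: "x0 \<in> Zgk g k" and psi0: "psi g k \<theta> x0 = 0"
    using psi_x0[OF _ x0_def] g by auto
  have "x \<noteq> x0"
  proof
    assume "x = x0"
    then show False using far[of 0] psi0 d by simp
  qed
  define w where "w y = exp (\<i> * complex_of_real (psi g k \<theta> y))" for y
  have sub: "{x,x0} \<subseteq> Zgk g k" using x x0X by auto
  have "(\<Sum>y\<in>Zgk g k. w y) = (\<Sum>y\<in>Zgk g k - {x,x0}. w y) + (\<Sum>y\<in>{x,x0}. w y)"
    by (rule sum.subset_diff[OF sub finite_Zgk])
  also have "(\<Sum>y\<in>{x,x0}. w y) = 1 + w x" using \<open>x \<noteq> x0\<close> psi0 by (simp add: w_def)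
  finally have split: "(\<Sum>y\<in>Zgk g k. w y) = (\<Sum>y\<in>Zgk g k - {x,x0}. w y) + (1 + w x)" .
  have c2: "card {x,x0} = 2" using \<open>x \<noteq> x0\<close> by simp
  have cX: "2 \<le> card (Zgk g k)" using card_mono[OF finite_Zgk sub] c2 by simp
  have "norm (\<Sum>y\<in>Zgk g k - {x,x0}. w y) \<le> (\<Sum>y\<in>Zgk g k - {x,x0}. norm (w y))" by (rule norm_sum)
  also have "\<dots> = real (card (Zgk g k - {x,x0}))" by (simp add: w_def)
  also have "\<dots> = real (card (Zgk g k)) - 2"
    using card_Diff_subset[OF _ sub] c2 cX by simp
  finally have rest: "norm (\<Sum>y\<in>Zgk g k - {x,x0}. w y) \<le> real g ^ k - 2" by (simp add: card_Zgk)
  define \<psi> where "\<psi> = psi g k \<theta> x"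
  have one: "norm (1 + w x) \<le> 2 - (1 - cos \<psi>)/2" unfolding w_def \<psi>_def by (rule norm_one_plus)
  have cb: "11/96 * \<delta>^2 \<le> 1 - cos \<psi>" unfolding \<psi>_def using d far by (intro one_minus_cos_bound) auto
  have "norm (\<Sum>y\<in>Zgk g k. w y) \<le> norm (\<Sum>y\<in>Zgk g k - {x,x0}. w y) + norm (1 + w x)"
    unfolding split by (rule norm_triangle_ineq)
  also have "\<dots> \<le> real g ^ k - 2 + (2 - (1 - cos \<psi>)/2)" using rest one by linarith
  also have "\<dots> \<le> real g ^ k - 11/192 * \<delta>^2" using cb by (simp add: field_simps)
  finally have S: "norm (\<Sum>y\<in>Zgk g k. w y) \<le> real g ^ k - 11/192 * \<delta>^2" .
  have Npos: "real g ^ k > 0" using g by simp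
  have "norm (Phi g k \<theta>) = (1 / real g ^ k) * norm (\<Sum>y\<in>Zgk g k. w y)"
    unfolding norm_Phi w_def by simp
  also have "\<dots> \<le> (1 / real g ^ k) * (real g ^ k - 11/192 * \<delta>^2)"
    using S Npos by (intro mult_left_mono) auto
  also have "\<dots> = 1 + (-(11/192) * (1/real g^k) * \<delta>^2)" using Npos by (simp add: field_simps)
  also have "\<dots> \<le> exp (-(11/192) * (1/real g^k) * \<delta>^2)" by (rule exp_ge_add_one_self)
  finally show ?thesis .
qed



lemma ge1_mult: "1 \<le> a \<Longrightarrow> 1 \<le> b \<Longrightarrow> 1 \<le> (a::real) * b"
  using mult_mono[of 1 a 1 b] by simp

lemma emeasure_Box: "emeasure (Leb g k) (Box g k) = ennreal ((2*pi) ^ dim_d g k)"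
proof -
  interpret product_sigma_finite "\<lambda>_. lborel :: real measure" by standard
  have "emeasure (Leb g k) (Box g k) = (\<Prod>c\<in>Idx g k. emeasure lborel {-pi..<pi})"
    unfolding Leb_def Box_def by (rule emeasure_PiM) (auto simp: finite_Idx)
  also have "\<dots> = (\<Prod>c\<in>Idx g k. ennreal (2*pi))" by simp
  also have "\<dots> = ennreal (2*pi) ^ card (Idx g k)" by simp
  also have "\<dots> = ennreal ((2*pi) ^ card (Idx g k))" by (rule ennreal_power) simp
  finally show ?thesis by (simp add: card_Idx)
qed

theorem proposition3p3:
  fixes g k t :: nat and \<delta> :: real
  assumes "g \<ge> 2" and "k \<ge> 2"
    and "0 < \<delta>"
    and "\<delta> < 8 / 5 * (1 / real g ^ (k + 3)) * (1 / real k ^ 2)"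
    and "t > 0"
  shows "norm (complex_of_real (1 / (2 * pi) ^ dim_d g k) *
           set_lebesgue_integral (Leb g k) (Rdelta g k \<delta>) (\<lambda>\<theta>. Phi g k \<theta> ^ t))
         \<le> exp (- (11 / 192) * (1 / real g ^ k) * real t * \<delta>\<^sup>2)"
proof -
  note g = assms(1) and kk = assms(2) and dpos = assms(3) and dlt = assms(4)
  define D where "D = real g ^ (k+3) * real k ^ 2"
  have Dge: "1 \<le> D" unfolding D_def using g kk
    by (intro ge1_mult) (auto simp: one_le_power)
  have dD: "\<delta> * D < 8/5" using dlt Dge unfolding D_def by (simp add: field_simps)
  have d2: "\<delta> \<le> 2"
  proof -
    have "\<delta> * 1 \<le> \<delta> * D" using Dge dpos by (intro mult_left_mono) auto
    then show ?thesis using dD by simp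
  qed
  have cI: "real (card (Idx g k)) \<le> real k ^ 2 * real g"
  proof -
    have "k choose 2 \<le> k ^ 2" using kk by (rule binomial_le_pow)
    moreover have "g - 1 \<le> g" by simp
    ultimately have "(k choose 2) * (g - 1) \<le> k ^ 2 * g" by (rule mult_le_mono)
    then have "real ((k choose 2) * (g - 1)) \<le> real (k ^ 2 * g)" by (rule of_nat_mono)
    then show ?thesis unfolding card_Idx dim_d_def by simp
  qed
  have kg1: "1 \<le> real k ^ 2 * real g" using g kk by (intro ge1_mult) (auto simp: one_le_power)
  have A: "\<delta>/2 + real (card (Idx g k)) * \<delta> \<le> 2 * \<delta> * (real k ^ 2 * real g)"
  proof -
    have "1/2 + real (card (Idx g k)) \<le> 2 * (real k ^ 2 * real g)" using cI kg1 by linarith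
    then have "\<delta> * (1/2 + real (card (Idx g k))) \<le> \<delta> * (2 * (real k ^ 2 * real g))"
      using dpos by (intro mult_left_mono) auto
    then show ?thesis by (simp add: algebra_simps)
  qed
  have B: "real g * real g ^ (k-2) \<le> real g ^ (k+3)"
  proof -
    have "real g * real g ^ (k-2) = real g ^ (Suc (k-2))" by simp
    also have "\<dots> \<le> real g ^ (k+3)" using g kk by (intro power_increasing) auto
    finally show ?thesis .
  qed
  have small: "(\<delta>/2 + real (card (Idx g k)) * \<delta>) * real g^(k-2) < 2*pi"
  proof -
    have "(\<delta>/2 + real (card (Idx g k)) * \<delta>) * real g^(k-2) \<le> (2 * \<delta> * (real k ^ 2 * real g)) * real g^(k-2)"
      using A by (intro mult_right_mono) auto
    also have "\<dots> = 2 * \<delta> * real k ^ 2 * (real g * real g^(k-2))" by (simp add: algebra_simps)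
    also have "\<dots> \<le> 2 * \<delta> * real k ^ 2 * real g ^ (k+3)"
      using B dpos by (intro mult_left_mono) auto
    also have "\<dots> = 2 * (\<delta> * D)" unfolding D_def by (simp add: algebra_simps)
    also have "\<dots> < 2 * (8/5)" using dD by linarith
    also have "\<dots> < 2 * pi" using pi_gt3 by simp
    finally show ?thesis .
  qed
  define b where "b = exp (- (11 / 192) * (1 / real g ^ k) * \<delta>\<^sup>2)"
  have bpos: "0 \<le> b" unfolding b_def by simp
  have pt: "norm (Phi g k \<theta> ^ t) \<le> b ^ t" if "\<theta> \<in> Rdelta g k \<delta>" for \<theta>
  proof -
    have "norm (Phi g k \<theta>) \<le> b" unfolding b_def using Phi_bound[OF g dpos d2 small that] by simp
    then show ?thesis unfolding norm_power by (intro power_mono) auto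
  qed
  have bt: "b ^ t = exp (- (11 / 192) * (1 / real g ^ k) * real t * \<delta>\<^sup>2)"
    unfolding b_def by (simp add: exp_of_nat_mult[symmetric] algebra_simps)
  define f where "f \<theta> = indicator (Rdelta g k \<delta>) \<theta> *\<^sub>R Phi g k \<theta> ^ t" for \<theta>
  have RB: "Rdelta g k \<delta> \<subseteq> Box g k" unfolding Rdelta_def by auto
  have Lb: "norm (integral\<^sup>L (Leb g k) f) \<le> b ^ t * (2*pi) ^ dim_d g k"
  proof (cases "integrable (Leb g k) f")
    case True
    have "ennreal (norm (integral\<^sup>L (Leb g k) f)) \<le> (\<integral>\<^sup>+x. norm (f x) \<partial>Leb g k)"
      by (rule integral_norm_bound_ennreal[OF True])
    also have "\<dots> \<le> (\<integral>\<^sup>+x. ennreal (b ^ t) * indicator (Box g k) x \<partial>Leb g k)"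
    proof (rule nn_integral_mono)
      fix x
      show "ennreal (norm (f x)) \<le> ennreal (b ^ t) * indicator (Box g k) x"
      proof (cases "x \<in> Rdelta g k \<delta>")
        case True
        then have "x \<in> Box g k" using RB by auto
        then show ?thesis using True pt[OF True] unfolding f_def by (simp add: ennreal_leI)
      next
        case False
        then show ?thesis unfolding f_def by simp
      qed
    qed
    also have "\<dots> = ennreal (b ^ t) * emeasure (Leb g k) (Box g k)"
    proof (rule nn_integral_cmult_indicator)
      show "Box g k \<in> sets (Leb g k)" unfolding Leb_def Box_def
        by (rule sets_PiM_I_finite) (auto simp: finite_Idx)
    qed
    also have "\<dots> = ennreal (b ^ t * (2*pi) ^ dim_d g k)"
      unfolding emeasure_Box using bpos by (simp add: ennreal_mult)
    finally show ?thesis using bpos by (subst (asm) ennreal_le_iff) auto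
  next
    case False
    then show ?thesis using bpos by (simp add: not_integrable_integral_eq)
  qed
  have "norm (complex_of_real (1 / (2 * pi) ^ dim_d g k) *
           set_lebesgue_integral (Leb g k) (Rdelta g k \<delta>) (\<lambda>\<theta>. Phi g k \<theta> ^ t))
      = (1 / (2 * pi) ^ dim_d g k) * norm (integral\<^sup>L (Leb g k) f)"
  proof -
    have "0 < 1 / (2 * pi) ^ dim_d g k" by simp
    then have "\<bar>1 / (2 * pi) ^ dim_d g k\<bar> = 1 / (2 * pi) ^ dim_d g k" by (rule abs_of_pos)
    then show ?thesis unfolding set_lebesgue_integral_def f_def by (simp only: norm_mult norm_of_real)
  qed
  also have "\<dots> \<le> (1 / (2 * pi) ^ dim_d g k) * (b ^ t * (2*pi) ^ dim_d g k)"
    using Lb by (intro mult_left_mono) auto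
  also have "\<dots> = b ^ t" by simp
  finally show ?thesis unfolding bt .
qed

end
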